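(* Let $X=\{a,b,c\}$ and consider the 25 commutative Frobenius objects in $\mathbf{Rel}$ on $X$ listed below (in all, $\tilde\mu$ is symmetric). Cases 1–20 have $\eta=\{a\}$, $\tilde\mu(a,x)=\tilde\mu(x,a)=\{x\}$, and $(\tilde\mu(b,b),\tilde\mu(b,c),\tilde\mu(c,c))$ and $\varepsilon$ given by: 1: $\varepsilon=\{a\}$, $(\{a\},\{c\},\{a,b\})$; 2: $\varepsilon=\{a\}$, $(\{a\},\{c\},\{a,b,c\})$; 3: $\varepsilon=\{a\}$, $(\{a,b\},\{c\},\{a,b\})$; 4: $\varepsilon=\{a\}$, $(\{a,b\},\{c\},\{a,b,c\})$; 5: $\varepsilon=\{a\}$, $(\{a,c\},\{b,c\},\{a,b\})$; 6: $\varepsilon=\{a\}$, $(\{a,c\},\{b,c\},\{a,b,c\})$; 7: $\varepsilon=\{a\}$, $(\{a,b,c\},\{b,c\},\{a,b,c\})$; 8: $\varepsilon=\{a\}$, $(\{b\},\{a,b,c\},\{b,c\})$; 9: $\varepsilon=\{a\}$, $(\{b\},\{a,b,c\},\{c\})$; 10: $\varepsilon=\{a\}$, $(\{c\},\{a\},\{b\})$; 11: $\varepsilon=\{a\}$, $(\{c\},\{a,b\},\{b,c\})$; 12: $\varepsilon=\{a\}$, $(\{b,c\},\{a,b,c\},\{b,c\})$; 13: $\varepsilon=\{b\}$, $(\emptyset,\emptyset,\{b\})$; 14: $\varepsilon=\{b\}$, $(\emptyset,\emptyset,\{b,c\})$; 15: $\varepsilon=\{b\}$, $(\{a\},\{c\},\{a,b\})$;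 16: $\varepsilon=\{b\}$, $(\{a\},\{c\},\{a,b,c\})$; 17: $\varepsilon=\{b\}$, $(\{c\},\{a\},\{b\})$; 18: $\varepsilon=\{b\}$, $(\{c\},\{a,c\},\{a,b,c\})$; 19: $\varepsilon=\{b\}$, $(\{a,c\},\{a,c\},\{a,b\})$; 20: $\varepsilon=\{b\}$, $(\{a,c\},\{a,c\},\{a,b,c\})$. Cases 21–24 have $\eta=\{a,b\}$, $\tilde\mu(a,a)=\{a\}$, $\tilde\mu(a,b)=\tilde\mu(a,c)=\emptyset$, $\tilde\mu(b,b)=\{b\}$, $\tilde\mu(b,c)=\{c\}$, and: 21: $\varepsilon=\{a,b\}$, $\tilde\mu(c,c)=\{b\}$; 22: $\varepsilon=\{a,b\}$, $\tilde\mu(c,c)=\{b,c\}$; 23: $\varepsilon=\{a,c\}$, $\tilde\mu(c,c)=\{b\}$; 24: $\varepsilon=\{a,c\}$, $\tilde\mu(c,c)=\emptyset$. Case 25: $\eta=\varepsilon=\{a,b,c\}$, $\tilde\mu(x,x)=\{x\}$, $\tilde\mu(x,y)=\emptyset$ for $x\neq y$. Then, for integers $g\ge0$, the partition functions are: for cases 1–12 and 21–25, $Z(\Sigma_g)=T$ for all $g$; for case 13, $Z(\Sigma_g)=T$ iff $g=1$; for cases 14, 15, 16, 18, 19, 20, $Z(\Sigma_g)=T$ iff $g\ge1$; for case 17, $Z(\Sigma_g)=T$ iff $g\equiv 1 \pmod 3$.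
   Context: $\mathbf{Rel}$ is the symmetric monoidal category of sets and relations ($S\circ R=\{(x,z):\exists y,(x,y)\in R,(y,z)\in S\}$, identities are diagonals, product is Cartesian product, unit $\{\bullet\}$). A relation $R\subseteq X\times Y$ is identified with $\tilde R:X\to\mathcal{P}(Y)$. A Frobenius object in $\mathbf{Rel}$ is a set $X$ with unit $\eta\subseteq X$ (relation $\{\bullet\}\to X$), counit $\varepsilon\subseteq X$ (relation $X\to\{\bullet\}$) and multiplication $\mu$ (relation $X\times X\to X$, with map $\tilde\mu$) satisfying unitality, associativity, and nondegeneracy: there is a (unique) relation $\beta:\{\bullet\}\to X\times X$ with $(\varepsilon\times\mathbf{1})\circ(\mu\times\mathbf{1})\circ(\mathbf{1}\times\beta)=(\mathbf{1}\times\varepsilon)\circ(\mathbf{1}\times\mu)\circ(\beta\times\mathbf{1})=\mathbf{1}$. The comultiplication is $\delta=(\mathbf{1}\times\mu)\circ(\beta\times\mathbf{1})$. Commutative means $\tilde\mu(x,y)=\tilde\mu(y,x)$. The partition function on the closed orientable surface of genus $g$ is $Z(\Sigma_g)=\varepsilon\circ(\mu\circ\delta)^g\circ\eta\in\{\emptyset,\{\bullet\}\}$, with $\emptyset$ read as $F$ and $\{\bullet\}$ as $T$. *)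

theory Defs
  imports Main
begin

text \<open>A morphism A -> B of Rel is a relation R :: ('a * 'b) set. Composition S o R
  (first R, then S) is the library relational composition R O S.
  The monoidal unit {bullet} is the type unit.\<close>

definition rcomp :: "('b \<times> 'c) set \<Rightarrow> ('a \<times> 'b) set \<Rightarrow> ('a \<times> 'c) set" (infixl "\<cdot>" 55) where
  "S \<cdot> R = R O S"

definition rtensor :: "('a \<times> 'b) set \<Rightarrow> ('c \<times> 'd) set \<Rightarrow> (('a \<times> 'c) \<times> ('b \<times> 'd)) set" (infixr "\<otimes>" 60) where
  "R \<otimes> S = {((x, x'), (y, y')) | x x' y y'. (x, y) \<in> R \<and> (x', y') \<in> S}"

definition lunit :: "((unit \<times> 'a) \<times> 'a) set" where "lunit = {(((), x), x) | x. True}"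
definition lunit_inv :: "('a \<times> (unit \<times> 'a)) set" where "lunit_inv = {(x, ((), x)) | x. True}"
definition runit :: "(('a \<times> unit) \<times> 'a) set" where "runit = {((x, ()), x) | x. True}"
definition runit_inv :: "('a \<times> ('a \<times> unit)) set" where "runit_inv = {(x, (x, ())) | x. True}"
definition assoc :: "((('a \<times> 'b) \<times> 'c) \<times> ('a \<times> ('b \<times> 'c))) set" where
  "assoc = {(((x, y), z), (x, (y, z))) | x y z. True}"
definition assoc_inv :: "(('a \<times> ('b \<times> 'c)) \<times> (('a \<times> 'b) \<times> 'c)) set" where
  "assoc_inv = {((x, (y, z)), ((x, y), z)) | x y z. True}"

definition unital :: "(unit \<times> 'x) set \<Rightarrow> (('x \<times> 'x) \<times> 'x) set \<Rightarrow> bool" where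
  "unital eta mu \<longleftrightarrow>
     mu \<cdot> (eta \<otimes> Id) \<cdot> lunit_inv = Id \<and> mu \<cdot> (Id \<otimes> eta) \<cdot> runit_inv = Id"

definition associative :: "(('x \<times> 'x) \<times> 'x) set \<Rightarrow> bool" where
  "associative mu \<longleftrightarrow> mu \<cdot> (mu \<otimes> Id) = mu \<cdot> (Id \<otimes> mu) \<cdot> assoc"

definition snake1 :: "('x \<times> unit) set \<Rightarrow> (('x \<times> 'x) \<times> 'x) set \<Rightarrow> (unit \<times> ('x \<times> 'x)) set \<Rightarrow> ('x \<times> 'x) set" where
  "snake1 eps mu beta = lunit \<cdot> (eps \<otimes> Id) \<cdot> (mu \<otimes> Id) \<cdot> assoc_inv \<cdot> (Id \<otimes> beta) \<cdot> runit_inv"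

definition snake2 :: "('x \<times> unit) set \<Rightarrow> (('x \<times> 'x) \<times> 'x) set \<Rightarrow> (unit \<times> ('x \<times> 'x)) set \<Rightarrow> ('x \<times> 'x) set" where
  "snake2 eps mu beta = runit \<cdot> (Id \<otimes> eps) \<cdot> (Id \<otimes> mu) \<cdot> assoc \<cdot> (beta \<otimes> Id) \<cdot> lunit_inv"

definition copairing :: "('x \<times> unit) set \<Rightarrow> (('x \<times> 'x) \<times> 'x) set \<Rightarrow> (unit \<times> ('x \<times> 'x)) set \<Rightarrow> bool" where
  "copairing eps mu beta \<longleftrightarrow> snake1 eps mu beta = Id \<and> snake2 eps mu beta = Id"

definition nondegenerate :: "('x \<times> unit) set \<Rightarrow> (('x \<times> 'x) \<times> 'x) set \<Rightarrow> bool" where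
  "nondegenerate eps mu \<longleftrightarrow> (\<exists>beta. copairing eps mu beta)"

definition frobenius :: "(unit \<times> 'x) set \<Rightarrow> ('x \<times> unit) set \<Rightarrow> (('x \<times> 'x) \<times> 'x) set \<Rightarrow> bool" where
  "frobenius eta eps mu \<longleftrightarrow> unital eta mu \<and> associative mu \<and> nondegenerate eps mu"

text \<open>The (unique) beta and the comultiplication delta = (1 x mu) o (beta x 1).\<close>
definition the_beta :: "('x \<times> unit) set \<Rightarrow> (('x \<times> 'x) \<times> 'x) set \<Rightarrow> (unit \<times> ('x \<times> 'x)) set" where
  "the_beta eps mu = (THE beta. copairing eps mu beta)"

definition comult :: "('x \<times> unit) set \<Rightarrow> (('x \<times> 'x) \<times> 'x) set \<Rightarrow> ('x \<times> ('x \<times> 'x)) set" where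
  "comult eps mu = (Id \<otimes> mu) \<cdot> assoc \<cdot> (the_beta eps mu \<otimes> Id) \<cdot> lunit_inv"

text \<open>Identification of relations with set-valued maps.\<close>
definition mu_tilde :: "(('x \<times> 'x) \<times> 'x) set \<Rightarrow> 'x \<Rightarrow> 'x \<Rightarrow> 'x set" where
  "mu_tilde mu x y = {z. ((x, y), z) \<in> mu}"

definition commutative :: "(('x \<times> 'x) \<times> 'x) set \<Rightarrow> bool" where
  "commutative mu \<longleftrightarrow> (\<forall>x y. mu_tilde mu x y = mu_tilde mu y x)"

text \<open>Partition function Z(Sigma_g) = eps o (mu o delta)^g o eta, a relation {bullet} -> {bullet};
  it is either empty (F) or {bullet} (T). We return True iff it is {bullet}.\<close>
definition Zrel :: "(unit \<times> 'x) set \<Rightarrow> ('x \<times> unit) set \<Rightarrow> (('x \<times> 'x) \<times> 'x) set \<Rightarrow> nat \<Rightarrow> (unit \<times> unit) set" where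
  "Zrel eta eps mu g = eps \<cdot> ((mu \<cdot> comult eps mu) ^^ g) \<cdot> eta"

definition Z :: "(unit \<times> 'x) set \<Rightarrow> ('x \<times> unit) set \<Rightarrow> (('x \<times> 'x) \<times> 'x) set \<Rightarrow> nat \<Rightarrow> bool" where
  "Z eta eps mu g \<longleftrightarrow> Zrel eta eps mu g = {((), ())}"

datatype X = a | b | c

definition unit_of :: "X set \<Rightarrow> (unit \<times> X) set" where "unit_of E = {((), x) | x. x \<in> E}"
definition counit_of :: "X set \<Rightarrow> (X \<times> unit) set" where "counit_of E = {(x, ()) | x. x \<in> E}"
definition mult_of :: "(X \<Rightarrow> X \<Rightarrow> X set) \<Rightarrow> ((X \<times> X) \<times> X) set" where
  "mult_of m = {((x, y), z) | x y z. z \<in> m x y}"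

definition tabA :: "X set \<Rightarrow> X set \<Rightarrow> X set \<Rightarrow> X \<Rightarrow> X \<Rightarrow> X set" where
  "tabA bb bc cc x y = (if x = a then {y} else if y = a then {x}
      else if x = b \<and> y = b then bb else if x = c \<and> y = c then cc else bc)"

definition tabB :: "X set \<Rightarrow> X \<Rightarrow> X \<Rightarrow> X set" where
  "tabB cc x y = (if x = a \<and> y = a then {a} else if x = a \<or> y = a then {}
      else if x = b \<and> y = b then {b} else if x = c \<and> y = c then cc else {c})"

definition tabC :: "X \<Rightarrow> X \<Rightarrow> X set" where
  "tabC x y = (if x = y then {x} else {})"

fun case_data :: "nat \<Rightarrow> X set \<times> X set \<times> (X \<Rightarrow> X \<Rightarrow> X set)" where
  "case_data k =
    (if k = 1 then ({a}, {a}, tabA {a} {c} {a,b})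
     else if k = 2 then ({a}, {a}, tabA {a} {c} {a,b,c})
     else if k = 3 then ({a}, {a}, tabA {a,b} {c} {a,b})
     else if k = 4 then ({a}, {a}, tabA {a,b} {c} {a,b,c})
     else if k = 5 then ({a}, {a}, tabA {a,c} {b,c} {a,b})
     else if k = 6 then ({a}, {a}, tabA {a,c} {b,c} {a,b,c})
     else if k = 7 then ({a}, {a}, tabA {a,b,c} {b,c} {a,b,c})
     else if k = 8 then ({a}, {a}, tabA {b} {a,b,c} {b,c})
     else if k = 9 then ({a}, {a}, tabA {b} {a,b,c} {c})
     else if k = 10 then ({a}, {a}, tabA {c} {a} {b})
     else if k = 11 then ({a}, {a}, tabA {c} {a,b} {b,c})
     else if k = 12 then ({a}, {a}, tabA {b,c} {a,b,c} {b,c})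
     else if k = 13 then ({a}, {b}, tabA {} {} {b})
     else if k = 14 then ({a}, {b}, tabA {} {} {b,c})
     else if k = 15 then ({a}, {b}, tabA {a} {c} {a,b})
     else if k = 16 then ({a}, {b}, tabA {a} {c} {a,b,c})
     else if k = 17 then ({a}, {b}, tabA {c} {a} {b})
     else if k = 18 then ({a}, {b}, tabA {c} {a,c} {a,b,c})
     else if k = 19 then ({a}, {b}, tabA {a,c} {a,c} {a,b})
     else if k = 20 then ({a}, {b}, tabA {a,c} {a,c} {a,b,c})
     else if k = 21 then ({a,b}, {a,b}, tabB {b})
     else if k = 22 then ({a,b}, {a,b}, tabB {b,c})
     else if k = 23 then ({a,b}, {a,c}, tabB {b})
     else if k = 24 then ({a,b}, {a,c}, tabB {})
     else ({a,b,c}, {a,b,c}, tabC))"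

definition eta_k :: "nat \<Rightarrow> (unit \<times> X) set" where "eta_k k = unit_of (fst (case_data k))"
definition eps_k :: "nat \<Rightarrow> (X \<times> unit) set" where "eps_k k = counit_of (fst (snd (case_data k)))"
definition mu_k :: "nat \<Rightarrow> ((X \<times> X) \<times> X) set" where "mu_k k = mult_of (snd (snd (case_data k)))"

end

theory Submission imports Defs begin

lemma X_all: "(\<forall>x::X. P x) = (P a \<and> P b \<and> P c)"
  by (metis X.exhaust)
lemma X_ex: "(\<exists>x::X. P x) = (P a \<or> P b \<or> P c)"
  by (metis X.exhaust)

lemma mem_rcomp: "((x,z) \<in> S \<cdot> R) = (\<exists>y. (x,y) \<in> R \<and> (y,z) \<in> S)"
  unfolding rcomp_def by auto
lemma mem_rtensor: "(((x,x'),(y,y')) \<in> R \<otimes> S) = ((x,y)\<in>R \<and> (x',y')\<in>S)"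
  unfolding rtensor_def by auto
lemma mem_struct:
  "((u,x),y) \<in> lunit = (x = y)"
  "(y,(u,x)) \<in> lunit_inv = (x = y)"
  "((x,u),y) \<in> runit = (x = y)"
  "(y,(x,u)) \<in> runit_inv = (x = y)"
  "(((x,y),z),(x',(y',z'))) \<in> assoc = (x=x' \<and> y=y' \<and> z=z')"
  "((x,(y,z)),((x',y'),z')) \<in> assoc_inv = (x=x' \<and> y=y' \<and> z=z')"
  unfolding lunit_def lunit_inv_def runit_def runit_inv_def assoc_def assoc_inv_def by auto
lemma mem_of:
  "((u,x) \<in> unit_of E) = (x \<in> E)"
  "((x,u) \<in> counit_of E) = (x \<in> E)"
  "(((x,y),z) \<in> mult_of m) = (z \<in> m x y)"
  unfolding unit_of_def counit_of_def mult_of_def by auto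

lemmas memsimps = mem_rcomp mem_rtensor mem_struct mem_of split_paired_Ex split_paired_All

lemma snake1_eq: "((x,z) \<in> snake1 (counit_of Ep) (mult_of m) B) = (\<exists>y. ((),(y,z))\<in>B \<and> (\<exists>w\<in>m x y. w\<in>Ep))"
  unfolding snake1_def by (simp add: memsimps) blast

lemma snake2_eq: "((x,z) \<in> snake2 (counit_of Ep) (mult_of m) B) = (\<exists>y. ((),(z,y))\<in>B \<and> (\<exists>w\<in>m y x. w\<in>Ep))"
  unfolding snake2_def by (simp add: memsimps) blast

lemma unital_eq: "unital (unit_of E) (mult_of m) = ((\<forall>x z. (\<exists>e\<in>E. z \<in> m e x) = (x = z)) \<and> (\<forall>x z. (\<exists>e\<in>E. z \<in> m x e) = (x = z)))"
  unfolding unital_def set_eq_iff by (simp add: memsimps Bex_def)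

lemma assoc_eq: "associative (mult_of m) = (\<forall>x y z w. (\<exists>u\<in>m x y. w \<in> m u z) = (\<exists>u\<in>m y z. w \<in> m x u))"
  unfolding associative_def set_eq_iff by (simp add: memsimps) blast

lemma comm_eq: "commutative (mult_of m) = (\<forall>x y. m x y = m y x)"
  unfolding commutative_def mu_tilde_def mult_of_def by auto

lemma H_eq: "((x,t) \<in> mult_of m \<cdot> ((Id \<otimes> mult_of m) \<cdot> assoc \<cdot> (B \<otimes> Id) \<cdot> lunit_inv)) =
   (\<exists>u v w. ((),(u,v)) \<in> B \<and> w \<in> m v x \<and> t \<in> m u w)"
  by (simp add: memsimps) blast

lemma copairing_iff: "copairing (counit_of Ep) (mult_of m) B =
  ((\<forall>x z. (\<exists>y. ((),(y,z))\<in>B \<and> (\<exists>w\<in>m x y. w\<in>Ep)) = (x = z)) \<and>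
   (\<forall>x z. (\<exists>y. ((),(z,y))\<in>B \<and> (\<exists>w\<in>m y x. w\<in>Ep)) = (x = z)))"
  unfolding copairing_def set_eq_iff by (simp add: split_paired_All snake1_eq snake2_eq)

lemma beta_sub:
  assumes "copairing (counit_of Ep) (mult_of m) B1" "copairing (counit_of Ep) (mult_of m) B2"
  shows "B1 \<subseteq> B2"
proof
  fix p assume p: "p \<in> B1"
  obtain u v where pe: "p = ((),(u,v))" by (cases p) auto
  from assms(2) obtain y where y: "((),(u,y))\<in>B2" "\<exists>w\<in>m y u. w\<in>Ep"
    unfolding copairing_iff by blast
  from assms(1) have "y = v" using p pe y(2) unfolding copairing_iff by blast
  then show "p \<in> B2" using y pe by simp
qed

lemma the_beta_eq: "copairing (counit_of Ep) (mult_of m) B \<Longrightarrow> the_beta (counit_of Ep) (mult_of m) = B"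
  unfolding the_beta_def
  apply (rule the_equality, assumption)
  by (meson beta_sub subset_antisym)

lemma H_mem: "copairing (counit_of Ep) (mult_of m) B \<Longrightarrow>
   ((x,t) \<in> mult_of m \<cdot> comult (counit_of Ep) (mult_of m)) = (\<exists>u v w. ((),(u,v)) \<in> B \<and> w \<in> m v x \<and> t \<in> m u w)"
  unfolding comult_def by (simp add: the_beta_eq H_eq)

lemma frob_comm_of:
  assumes "\<forall>x z. (\<exists>e\<in>E. z \<in> m e x) = (x = z)" "\<forall>x z. (\<exists>e\<in>E. z \<in> m x e) = (x = z)"
    "\<forall>x y z w. (\<exists>u\<in>m x y. w \<in> m u z) = (\<exists>u\<in>m y z. w \<in> m x u)"
    "copairing (counit_of Ep) (mult_of m) B" "\<forall>x y. m x y = m y x"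
  shows "frobenius (unit_of E) (counit_of Ep) (mult_of m) \<and> commutative (mult_of m)"
  using assms unfolding frobenius_def nondegenerate_def
  by (auto simp: unital_eq assoc_eq comm_eq)

lemma Z_iff: "Z (unit_of E) (counit_of Ep) mu g = (\<exists>x y. x\<in>E \<and> (x,y) \<in> (mu \<cdot> comult (counit_of Ep) mu)^^g \<and> y\<in>Ep)"
proof -
  have "Z (unit_of E) (counit_of Ep) mu g = (((),()) \<in> Zrel (unit_of E) (counit_of Ep) mu g)"
    unfolding Z_def by auto
  also have "\<dots> = (\<exists>x y. x\<in>E \<and> (x,y) \<in> (mu \<cdot> comult (counit_of Ep) mu)^^g \<and> y\<in>Ep)"
    unfolding Zrel_def by (simp add: mem_rcomp mem_of)
  finally show ?thesis .
qed

lemma refl_pow: "(x,x) \<in> H \<Longrightarrow> (x,x) \<in> H^^g"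
  by (induction g) auto

lemma loop_pow: "(x,y) \<in> H \<Longrightarrow> (y,y) \<in> H \<Longrightarrow> (x,y) \<in> H^^Suc g"
  by (induction g) auto

lemma path_pow: "(x,y) \<in> H \<Longrightarrow> (y,y) \<in> H \<Longrightarrow> (y,z) \<in> H \<Longrightarrow> (x,z) \<in> H \<Longrightarrow> (x,z) \<in> H^^Suc g"
proof (cases g)
  case (Suc n)
  assume h: "(x,y) \<in> H" "(y,y) \<in> H" "(y,z) \<in> H"
  from h(1,2) have "(x,y) \<in> H^^Suc n" by (rule loop_pow)
  then show ?thesis using Suc h(3) by (metis relpow_Suc_I)
qed simp

lemma rel_eqI: "(\<forall>x y. ((x::X,y::X) \<in> R) = ((x,y) \<in> S)) \<Longrightarrow> R = S"
  by auto

definition D1 :: "(unit \<times> (X \<times> X)) set" where "D1 = {((),(a,a)),((),(b,b)),((),(c,c))}"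
definition D2 :: "(unit \<times> (X \<times> X)) set" where "D2 = {((),(a,a)),((),(b,c)),((),(c,b))}"
definition D3 :: "(unit \<times> (X \<times> X)) set" where "D3 = {((),(a,b)),((),(b,a)),((),(c,c))}"


lemma Z_allT:
  assumes "copairing (counit_of Ep) (mult_of m) B" "a\<in>E" "a\<in>Ep"
    "\<exists>u v w. ((),(u,v))\<in>B \<and> w \<in> m v a \<and> a \<in> m u w"
  shows "Z (unit_of E) (counit_of Ep) (mult_of m) g"
proof -
  have "(a,a) \<in> mult_of m \<cdot> comult (counit_of Ep) (mult_of m)"
    using assms(4) by (simp add: H_mem[OF assms(1)])
  then have "(a,a) \<in> (mult_of m \<cdot> comult (counit_of Ep) (mult_of m))^^g" by (rule refl_pow)
  then show ?thesis using assms(2,3) by (auto simp: Z_iff)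
qed

lemma Z_ge1:
  assumes "copairing (counit_of Ep) (mult_of m) B" "E = {a}" "Ep = {b}"
    "\<exists>u v w. ((),(u,v))\<in>B \<and> w \<in> m v a \<and> y \<in> m u w"
    "\<exists>u v w. ((),(u,v))\<in>B \<and> w \<in> m v y \<and> y \<in> m u w"
    "\<exists>u v w. ((),(u,v))\<in>B \<and> w \<in> m v y \<and> b \<in> m u w"
    "\<exists>u v w. ((),(u,v))\<in>B \<and> w \<in> m v a \<and> b \<in> m u w"
  shows "Z (unit_of E) (counit_of Ep) (mult_of m) g = (g \<ge> 1)"
proof (cases g)
  case 0
  then show ?thesis using assms(2,3) by (simp add: Z_iff)
next
  case (Suc n)
  let ?H = "mult_of m \<cdot> comult (counit_of Ep) (mult_of m)"
  have "(a,y) \<in> ?H" "(y,y) \<in> ?H" "(y,b) \<in> ?H" "(a,b) \<in> ?H"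
    using assms(4-7) by (simp_all add: H_mem[OF assms(1)])
  then have "(a,b) \<in> ?H^^Suc n" by (rule path_pow)
  then show ?thesis using Suc assms(2,3) by (auto simp: Z_iff)
qed

lemma mem_O: "((x,z) \<in> R O S) = (\<exists>y. (x,y)\<in>R \<and> (y,z)\<in>S)"
  by auto
lemma fc1: "frobenius (eta_k 1) (eps_k 1) (mu_k 1) \<and> commutative (mu_k 1)"
  unfolding eta_k_def eps_k_def mu_k_def
  by (simp, rule frob_comm_of[where B=D1]; simp add: copairing_iff X_all X_ex tabA_def tabB_def tabC_def D1_def D2_def D3_def)
lemma fc2: "frobenius (eta_k 2) (eps_k 2) (mu_k 2) \<and> commutative (mu_k 2)"
  unfolding eta_k_def eps_k_def mu_k_def
  by (simp, rule frob_comm_of[where B=D1]; simp add: copairing_iff X_all X_ex tabA_def tabB_def tabC_def D1_def D2_def D3_def)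
lemma fc3: "frobenius (eta_k 3) (eps_k 3) (mu_k 3) \<and> commutative (mu_k 3)"
  unfolding eta_k_def eps_k_def mu_k_def
  by (simp, rule frob_comm_of[where B=D1]; simp add: copairing_iff X_all X_ex tabA_def tabB_def tabC_def D1_def D2_def D3_def)
lemma fc4: "frobenius (eta_k 4) (eps_k 4) (mu_k 4) \<and> commutative (mu_k 4)"
  unfolding eta_k_def eps_k_def mu_k_def
  by (simp, rule frob_comm_of[where B=D1]; simp add: copairing_iff X_all X_ex tabA_def tabB_def tabC_def D1_def D2_def D3_def)
lemma fc5: "frobenius (eta_k 5) (eps_k 5) (mu_k 5) \<and> commutative (mu_k 5)"
  unfolding eta_k_def eps_k_def mu_k_def
  by (simp, rule frob_comm_of[where B=D1]; simp add: copairing_iff X_all X_ex tabA_def tabB_def tabC_def D1_def D2_def D3_def)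
lemma fc6: "frobenius (eta_k 6) (eps_k 6) (mu_k 6) \<and> commutative (mu_k 6)"
  unfolding eta_k_def eps_k_def mu_k_def
  by (simp, rule frob_comm_of[where B=D1]; simp add: copairing_iff X_all X_ex tabA_def tabB_def tabC_def D1_def D2_def D3_def)
lemma fc7: "frobenius (eta_k 7) (eps_k 7) (mu_k 7) \<and> commutative (mu_k 7)"
  unfolding eta_k_def eps_k_def mu_k_def
  by (simp, rule frob_comm_of[where B=D1]; simp add: copairing_iff X_all X_ex tabA_def tabB_def tabC_def D1_def D2_def D3_def)
lemma fc8: "frobenius (eta_k 8) (eps_k 8) (mu_k 8) \<and> commutative (mu_k 8)"
  unfolding eta_k_def eps_k_def mu_k_def
  by (simp, rule frob_comm_of[where B=D2]; simp add: copairing_iff X_all X_ex tabA_def tabB_def tabC_def D1_def D2_def D3_def)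
lemma fc9: "frobenius (eta_k 9) (eps_k 9) (mu_k 9) \<and> commutative (mu_k 9)"
  unfolding eta_k_def eps_k_def mu_k_def
  by (simp, rule frob_comm_of[where B=D2]; simp add: copairing_iff X_all X_ex tabA_def tabB_def tabC_def D1_def D2_def D3_def)
lemma fc10: "frobenius (eta_k 10) (eps_k 10) (mu_k 10) \<and> commutative (mu_k 10)"
  unfolding eta_k_def eps_k_def mu_k_def
  by (simp, rule frob_comm_of[where B=D2]; simp add: copairing_iff X_all X_ex tabA_def tabB_def tabC_def D1_def D2_def D3_def)
lemma fc11: "frobenius (eta_k 11) (eps_k 11) (mu_k 11) \<and> commutative (mu_k 11)"
  unfolding eta_k_def eps_k_def mu_k_def
  by (simp, rule frob_comm_of[where B=D2]; simp add: copairing_iff X_all X_ex tabA_def tabB_def tabC_def D1_def D2_def D3_def)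
lemma fc12: "frobenius (eta_k 12) (eps_k 12) (mu_k 12) \<and> commutative (mu_k 12)"
  unfolding eta_k_def eps_k_def mu_k_def
  by (simp, rule frob_comm_of[where B=D2]; simp add: copairing_iff X_all X_ex tabA_def tabB_def tabC_def D1_def D2_def D3_def)
lemma fc13: "frobenius (eta_k 13) (eps_k 13) (mu_k 13) \<and> commutative (mu_k 13)"
  unfolding eta_k_def eps_k_def mu_k_def
  by (simp, rule frob_comm_of[where B=D3]; simp add: copairing_iff X_all X_ex tabA_def tabB_def tabC_def D1_def D2_def D3_def)
lemma fc14: "frobenius (eta_k 14) (eps_k 14) (mu_k 14) \<and> commutative (mu_k 14)"
  unfolding eta_k_def eps_k_def mu_k_def
  by (simp, rule frob_comm_of[where B=D3]; simp add: copairing_iff X_all X_ex tabA_def tabB_def tabC_def D1_def D2_def D3_def)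
lemma fc15: "frobenius (eta_k 15) (eps_k 15) (mu_k 15) \<and> commutative (mu_k 15)"
  unfolding eta_k_def eps_k_def mu_k_def
  by (simp, rule frob_comm_of[where B=D3]; simp add: copairing_iff X_all X_ex tabA_def tabB_def tabC_def D1_def D2_def D3_def)
lemma fc16: "frobenius (eta_k 16) (eps_k 16) (mu_k 16) \<and> commutative (mu_k 16)"
  unfolding eta_k_def eps_k_def mu_k_def
  by (simp, rule frob_comm_of[where B=D3]; simp add: copairing_iff X_all X_ex tabA_def tabB_def tabC_def D1_def D2_def D3_def)
lemma fc17: "frobenius (eta_k 17) (eps_k 17) (mu_k 17) \<and> commutative (mu_k 17)"
  unfolding eta_k_def eps_k_def mu_k_def
  by (simp, rule frob_comm_of[where B=D3]; simp add: copairing_iff X_all X_ex tabA_def tabB_def tabC_def D1_def D2_def D3_def)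
lemma fc18: "frobenius (eta_k 18) (eps_k 18) (mu_k 18) \<and> commutative (mu_k 18)"
  unfolding eta_k_def eps_k_def mu_k_def
  by (simp, rule frob_comm_of[where B=D3]; simp add: copairing_iff X_all X_ex tabA_def tabB_def tabC_def D1_def D2_def D3_def)
lemma fc19: "frobenius (eta_k 19) (eps_k 19) (mu_k 19) \<and> commutative (mu_k 19)"
  unfolding eta_k_def eps_k_def mu_k_def
  by (simp, rule frob_comm_of[where B=D3]; simp add: copairing_iff X_all X_ex tabA_def tabB_def tabC_def D1_def D2_def D3_def)
lemma fc20: "frobenius (eta_k 20) (eps_k 20) (mu_k 20) \<and> commutative (mu_k 20)"
  unfolding eta_k_def eps_k_def mu_k_def
  by (simp, rule frob_comm_of[where B=D3]; simp add: copairing_iff X_all X_ex tabA_def tabB_def tabC_def D1_def D2_def D3_def)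
lemma fc21: "frobenius (eta_k 21) (eps_k 21) (mu_k 21) \<and> commutative (mu_k 21)"
  unfolding eta_k_def eps_k_def mu_k_def
  by (simp, rule frob_comm_of[where B=D1]; simp add: copairing_iff X_all X_ex tabA_def tabB_def tabC_def D1_def D2_def D3_def)
lemma fc22: "frobenius (eta_k 22) (eps_k 22) (mu_k 22) \<and> commutative (mu_k 22)"
  unfolding eta_k_def eps_k_def mu_k_def
  by (simp, rule frob_comm_of[where B=D1]; simp add: copairing_iff X_all X_ex tabA_def tabB_def tabC_def D1_def D2_def D3_def)
lemma fc23: "frobenius (eta_k 23) (eps_k 23) (mu_k 23) \<and> commutative (mu_k 23)"
  unfolding eta_k_def eps_k_def mu_k_def
  by (simp, rule frob_comm_of[where B=D2]; simp add: copairing_iff X_all X_ex tabA_def tabB_def tabC_def D1_def D2_def D3_def)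
lemma fc24: "frobenius (eta_k 24) (eps_k 24) (mu_k 24) \<and> commutative (mu_k 24)"
  unfolding eta_k_def eps_k_def mu_k_def
  by (simp, rule frob_comm_of[where B=D2]; simp add: copairing_iff X_all X_ex tabA_def tabB_def tabC_def D1_def D2_def D3_def)
lemma fc25: "frobenius (eta_k 25) (eps_k 25) (mu_k 25) \<and> commutative (mu_k 25)"
  unfolding eta_k_def eps_k_def mu_k_def
  by (simp, rule frob_comm_of[where B=D1]; simp add: copairing_iff X_all X_ex tabA_def tabB_def tabC_def D1_def D2_def D3_def)
lemma z1: "Z (eta_k 1) (eps_k 1) (mu_k 1) g"
  unfolding eta_k_def eps_k_def mu_k_def
  by (simp, rule Z_allT[where B=D1]; simp add: copairing_iff X_all X_ex tabA_def tabB_def tabC_def D1_def D2_def D3_def)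
lemma z2: "Z (eta_k 2) (eps_k 2) (mu_k 2) g"
  unfolding eta_k_def eps_k_def mu_k_def
  by (simp, rule Z_allT[where B=D1]; simp add: copairing_iff X_all X_ex tabA_def tabB_def tabC_def D1_def D2_def D3_def)
lemma z3: "Z (eta_k 3) (eps_k 3) (mu_k 3) g"
  unfolding eta_k_def eps_k_def mu_k_def
  by (simp, rule Z_allT[where B=D1]; simp add: copairing_iff X_all X_ex tabA_def tabB_def tabC_def D1_def D2_def D3_def)
lemma z4: "Z (eta_k 4) (eps_k 4) (mu_k 4) g"
  unfolding eta_k_def eps_k_def mu_k_def
  by (simp, rule Z_allT[where B=D1]; simp add: copairing_iff X_all X_ex tabA_def tabB_def tabC_def D1_def D2_def D3_def)
lemma z5: "Z (eta_k 5) (eps_k 5) (mu_k 5) g"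
  unfolding eta_k_def eps_k_def mu_k_def
  by (simp, rule Z_allT[where B=D1]; simp add: copairing_iff X_all X_ex tabA_def tabB_def tabC_def D1_def D2_def D3_def)
lemma z6: "Z (eta_k 6) (eps_k 6) (mu_k 6) g"
  unfolding eta_k_def eps_k_def mu_k_def
  by (simp, rule Z_allT[where B=D1]; simp add: copairing_iff X_all X_ex tabA_def tabB_def tabC_def D1_def D2_def D3_def)
lemma z7: "Z (eta_k 7) (eps_k 7) (mu_k 7) g"
  unfolding eta_k_def eps_k_def mu_k_def
  by (simp, rule Z_allT[where B=D1]; simp add: copairing_iff X_all X_ex tabA_def tabB_def tabC_def D1_def D2_def D3_def)
lemma z8: "Z (eta_k 8) (eps_k 8) (mu_k 8) g"
  unfolding eta_k_def eps_k_def mu_k_def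
  by (simp, rule Z_allT[where B=D2]; simp add: copairing_iff X_all X_ex tabA_def tabB_def tabC_def D1_def D2_def D3_def)
lemma z9: "Z (eta_k 9) (eps_k 9) (mu_k 9) g"
  unfolding eta_k_def eps_k_def mu_k_def
  by (simp, rule Z_allT[where B=D2]; simp add: copairing_iff X_all X_ex tabA_def tabB_def tabC_def D1_def D2_def D3_def)
lemma z10: "Z (eta_k 10) (eps_k 10) (mu_k 10) g"
  unfolding eta_k_def eps_k_def mu_k_def
  by (simp, rule Z_allT[where B=D2]; simp add: copairing_iff X_all X_ex tabA_def tabB_def tabC_def D1_def D2_def D3_def)
lemma z11: "Z (eta_k 11) (eps_k 11) (mu_k 11) g"
  unfolding eta_k_def eps_k_def mu_k_def
  by (simp, rule Z_allT[where B=D2]; simp add: copairing_iff X_all X_ex tabA_def tabB_def tabC_def D1_def D2_def D3_def)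
lemma z12: "Z (eta_k 12) (eps_k 12) (mu_k 12) g"
  unfolding eta_k_def eps_k_def mu_k_def
  by (simp, rule Z_allT[where B=D2]; simp add: copairing_iff X_all X_ex tabA_def tabB_def tabC_def D1_def D2_def D3_def)
lemma z21: "Z (eta_k 21) (eps_k 21) (mu_k 21) g"
  unfolding eta_k_def eps_k_def mu_k_def
  by (simp, rule Z_allT[where B=D1]; simp add: copairing_iff X_all X_ex tabA_def tabB_def tabC_def D1_def D2_def D3_def)
lemma z22: "Z (eta_k 22) (eps_k 22) (mu_k 22) g"
  unfolding eta_k_def eps_k_def mu_k_def
  by (simp, rule Z_allT[where B=D1]; simp add: copairing_iff X_all X_ex tabA_def tabB_def tabC_def D1_def D2_def D3_def)
lemma z23: "Z (eta_k 23) (eps_k 23) (mu_k 23) g"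
  unfolding eta_k_def eps_k_def mu_k_def
  by (simp, rule Z_allT[where B=D2]; simp add: copairing_iff X_all X_ex tabA_def tabB_def tabC_def D1_def D2_def D3_def)
lemma z24: "Z (eta_k 24) (eps_k 24) (mu_k 24) g"
  unfolding eta_k_def eps_k_def mu_k_def
  by (simp, rule Z_allT[where B=D2]; simp add: copairing_iff X_all X_ex tabA_def tabB_def tabC_def D1_def D2_def D3_def)
lemma z25: "Z (eta_k 25) (eps_k 25) (mu_k 25) g"
  unfolding eta_k_def eps_k_def mu_k_def
  by (simp, rule Z_allT[where B=D1]; simp add: copairing_iff X_all X_ex tabA_def tabB_def tabC_def D1_def D2_def D3_def)
lemma z14: "Z (eta_k 14) (eps_k 14) (mu_k 14) g = (g \<ge> 1)"
  unfolding eta_k_def eps_k_def mu_k_def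
  by (rule Z_ge1[where B=D3 and y=c]; simp add: copairing_iff X_all X_ex tabA_def tabB_def tabC_def D1_def D2_def D3_def)
lemma z15: "Z (eta_k 15) (eps_k 15) (mu_k 15) g = (g \<ge> 1)"
  unfolding eta_k_def eps_k_def mu_k_def
  by (rule Z_ge1[where B=D3 and y=a]; simp add: copairing_iff X_all X_ex tabA_def tabB_def tabC_def D1_def D2_def D3_def)
lemma z16: "Z (eta_k 16) (eps_k 16) (mu_k 16) g = (g \<ge> 1)"
  unfolding eta_k_def eps_k_def mu_k_def
  by (rule Z_ge1[where B=D3 and y=a]; simp add: copairing_iff X_all X_ex tabA_def tabB_def tabC_def D1_def D2_def D3_def)
lemma z18: "Z (eta_k 18) (eps_k 18) (mu_k 18) g = (g \<ge> 1)"
  unfolding eta_k_def eps_k_def mu_k_def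
  by (rule Z_ge1[where B=D3 and y=a]; simp add: copairing_iff X_all X_ex tabA_def tabB_def tabC_def D1_def D2_def D3_def)
lemma z19: "Z (eta_k 19) (eps_k 19) (mu_k 19) g = (g \<ge> 1)"
  unfolding eta_k_def eps_k_def mu_k_def
  by (rule Z_ge1[where B=D3 and y=a]; simp add: copairing_iff X_all X_ex tabA_def tabB_def tabC_def D1_def D2_def D3_def)
lemma z20: "Z (eta_k 20) (eps_k 20) (mu_k 20) g = (g \<ge> 1)"
  unfolding eta_k_def eps_k_def mu_k_def
  by (rule Z_ge1[where B=D3 and y=a]; simp add: copairing_iff X_all X_ex tabA_def tabB_def tabC_def D1_def D2_def D3_def)

lemma H13: "mu_k 13 \<cdot> comult (counit_of {b}) (mu_k 13) = {(a,b)}"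
proof -
  have cp: "copairing (counit_of {b}) (mult_of (tabA {} {} {b})) D3"
    by (simp add: copairing_iff X_all X_ex tabA_def D3_def)
  show ?thesis
    unfolding mu_k_def
    by (simp, rule rel_eqI, simp add: H_mem[OF cp] X_all X_ex tabA_def D3_def)
qed

lemma z13: "Z (eta_k 13) (eps_k 13) (mu_k 13) g = (g = 1)"
proof -
  let ?H = "mu_k 13 \<cdot> comult (counit_of {b}) (mu_k 13)"
  have e: "eta_k 13 = unit_of {a}" "eps_k 13 = counit_of {b}"
    unfolding eta_k_def eps_k_def by simp_all
  have zz: "?H^^Suc (Suc n) = {}" for n
    by (induction n) (auto simp: H13)
  show ?thesis
  proof (cases g)
    case 0 then show ?thesis by (simp add: e Z_iff)
  next
    case (Suc n)
    then show ?thesis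
    proof (cases n)
      case 0 then show ?thesis using Suc by (simp add: e Z_iff H13)
    next
      case (Suc n') then show ?thesis using \<open>g = Suc n\<close> zz[of n'] by (simp add: e Z_iff del: relpow.simps)
    qed
  qed
qed

lemma H17: "mu_k 17 \<cdot> comult (counit_of {b}) (mu_k 17) = {(a,b),(b,c),(c,a)}"
proof -
  have cp: "copairing (counit_of {b}) (mult_of (tabA {c} {a} {b})) D3"
    by (simp add: copairing_iff X_all X_ex tabA_def D3_def)
  show ?thesis
    unfolding mu_k_def
    by (simp, rule rel_eqI, simp add: H_mem[OF cp] X_all X_ex tabA_def D3_def)
qed

lemma z17: "Z (eta_k 17) (eps_k 17) (mu_k 17) g = (g mod 3 = 1)"
proof -
  let ?H = "mu_k 17 \<cdot> comult (counit_of {b}) (mu_k 17)"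
  have e: "eta_k 17 = unit_of {a}" "eps_k 17 = counit_of {b}"
    unfolding eta_k_def eps_k_def by simp_all
  have h3: "?H^^3 = Id"
    by (rule rel_eqI) (simp add: H17 numeral_3_eq_3 mem_O X_all X_ex)
  have per: "?H^^(3*q + r) = ?H^^r" for q r
  proof (induction q)
    case (Suc q)
    have "?H^^(3*Suc q + r) = ?H^^3 O ?H^^(3*q+r)"
      by (metis relpow_add add.assoc mult_Suc_right)
    then show ?case using Suc h3 by simp
  qed simp
  have "g = 3*(g div 3) + g mod 3" by simp
  then have hg: "?H^^g = ?H^^(g mod 3)" using per by metis
  have "g mod 3 = 0 \<or> g mod 3 = 1 \<or> g mod 3 = 2" by arith
  then show ?thesis
  proof (elim disjE)
    assume m: "g mod 3 = 0" show ?thesis unfolding e Z_iff hg m by simp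
  next
    assume m: "g mod 3 = 1" show ?thesis unfolding e Z_iff hg m by (simp add: H17)
  next
    assume m: "g mod 3 = 2" show ?thesis
      unfolding e Z_iff hg m by (simp add: H17 numeral_2_eq_2 mem_O)
  qed
qed

theorem mainTheorem6:
  shows "(\<forall>k \<in> {1..25::nat}. frobenius (eta_k k) (eps_k k) (mu_k k) \<and> commutative (mu_k k))
    \<and> (\<forall>k \<in> {1..12} \<union> {21..25}. \<forall>g. Z (eta_k k) (eps_k k) (mu_k k) g)
    \<and> (\<forall>g. Z (eta_k 13) (eps_k 13) (mu_k 13) g \<longleftrightarrow> g = 1)
    \<and> (\<forall>k \<in> {14, 15, 16, 18, 19, 20}. \<forall>g. Z (eta_k k) (eps_k k) (mu_k k) g \<longleftrightarrow> g \<ge> 1)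
    \<and> (\<forall>g. Z (eta_k 17) (eps_k 17) (mu_k 17) g \<longleftrightarrow> g mod 3 = 1)"
proof (intro conjI)
  have r25: "{1..25::nat} = {1,2,3,4,5,6,7,8,9,10,11,12,13,14,15,16,17,18,19,20,21,22,23,24,25}"
    by code_simp
  show "\<forall>k \<in> {1..25::nat}. frobenius (eta_k k) (eps_k k) (mu_k k) \<and> commutative (mu_k k)"
    unfolding r25 using fc1 fc2 fc3 fc4 fc5 fc6 fc7 fc8 fc9 fc10 fc11 fc12 fc13 fc14 fc15 fc16 fc17
      fc18 fc19 fc20 fc21 fc22 fc23 fc24 fc25 by simp
  have r12: "{1..12::nat} \<union> {21..25} = {1,2,3,4,5,6,7,8,9,10,11,12,21,22,23,24,25}"
    by code_simp
  show "\<forall>k \<in> {1..12} \<union> {21..25}. \<forall>g. Z (eta_k k) (eps_k k) (mu_k k) g"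
    unfolding r12 using z1 z2 z3 z4 z5 z6 z7 z8 z9 z10 z11 z12 z21 z22 z23 z24 z25 by auto
  show "\<forall>g. Z (eta_k 13) (eps_k 13) (mu_k 13) g \<longleftrightarrow> g = 1" using z13 by simp
  show "\<forall>k \<in> {14, 15, 16, 18, 19, 20}. \<forall>g. Z (eta_k k) (eps_k k) (mu_k k) g \<longleftrightarrow> g \<ge> 1"
    using z14 z15 z16 z18 z19 z20 by simp
  show "\<forall>g. Z (eta_k 17) (eps_k 17) (mu_k 17) g \<longleftrightarrow> g mod 3 = 1" using z17 by simp
qed

end
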